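(* Let $(u_n),(v_n)$ be complex sequences vanishing faster than any negative power of $|n|$ as $n\to\pm\infty$ with $1-u_nv_n\ne0$ for all $n\in\mathbb Z$, and consider the system $$\begin{bmatrix}\xi_n\\ \eta_n\end{bmatrix}=\begin{bmatrix} z & z\,u_n\\ z^{-1}v_n & z^{-1}\end{bmatrix}\begin{bmatrix}\xi_{n+1}\\ \eta_{n+1}\end{bmatrix},\qquad n\in\mathbb Z.$$ Define $a_n:=\det\begin{bmatrix}\phi_n&\psi_n\end{bmatrix}$ and $\bar a_n:=\det\begin{bmatrix}\bar\phi_n&\bar\psi_n\end{bmatrix}$. Then: (a) $a_n$ and $\bar a_n$ depend on both $n$ and $z$, and $$a_n=\frac{D_\infty}{D_{n-1}}\,\frac1{T_{\rm r}},\qquad \bar a_n=-\frac{D_\infty}{D_{n-1}}\,\frac1{\bar T_{\rm r}};$$ (b) consequently the linear dependence of $\phi_n$ and $\psi_n$ occurs at the poles of $T_{\rm r}$, and that of $\bar\phi_n$ and $\bar\psi_n$ at the poles of $\bar T_{\rm r}$; (c) if $T_{\rm r}$ has a pole at $z=\pm z_j$ of multiplicity $m_j$ then $\frac{d^k a_n}{dz^k}\big|_{z=\pm z_j}=0$ for $0\le k\le m_j-1$ and all $n\in\mathbb Z$, and if $\bar T_{\rm r}$ has a pole at $z=\pm\bar z_j$ of multiplicity $\bar m_j$ then $\frac{d^k \bar a_n}{dz^k}\big|_{z=\pm \bar z_j}=0$ for $0\le k\le \bar m_j-1$ and all $n\in\mathbb Z$.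
   Context: $D_n:=\prod_{j=-\infty}^{n}(1-u_jv_j)$ and $D_\infty:=\prod_{j=-\infty}^{\infty}(1-u_jv_j)$ (both nonzero and independent of $z$). For $|z|=1$ the Jost solutions (overbars are not complex conjugation) satisfy $\psi_n=\begin{bmatrix}o(1)\\ z^n[1+o(1)]\end{bmatrix}$ as $n\to+\infty$; $\phi_n=\begin{bmatrix}z^{-n}[1+o(1)]\\ o(1)\end{bmatrix}$ as $n\to-\infty$; $\bar\psi_n=\begin{bmatrix}z^{-n}[1+o(1)]\\ o(1)\end{bmatrix}$ as $n\to+\infty$; $\bar\phi_n=\begin{bmatrix}o(1)\\ z^{n}[1+o(1)]\end{bmatrix}$ as $n\to-\infty$. The right transmission coefficients are defined by: first component of $\phi_n$ $=(1/T_{\rm r})z^{-n}[1+o(1)]$ and second component of $\bar\phi_n$ $=(1/\bar T_{\rm r})z^{n}[1+o(1)]$ as $n\to+\infty$. The functions $z^{-n}\psi_n$, $z^n\phi_n$, $1/T_{\rm r}$ extend analytically to $|z|<1$ and $z^n\bar\psi_n$, $z^{-n}\bar\phi_n$, $1/\bar T_{\rm r}$ extend analytically to $|z|>1$; the statements about poles and derivatives refer to these extensions. *)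

theory Defs
  imports "HOL-Complex_Analysis.Complex_Analysis"
begin

definition scalev :: "complex \<Rightarrow> complex \<times> complex \<Rightarrow> complex \<times> complex" where
  "scalev c x = (c * fst x, c * snd x)"

definition det2 :: "complex \<times> complex \<Rightarrow> complex \<times> complex \<Rightarrow> complex" where
  "det2 x y = fst x * snd y - snd x * fst y"

definition is_solution ::
  "(int \<Rightarrow> complex) \<Rightarrow> (int \<Rightarrow> complex) \<Rightarrow> complex \<Rightarrow> (int \<Rightarrow> complex \<times> complex) \<Rightarrow> bool" where
  "is_solution u v z X \<longleftrightarrow>
     (\<forall>n::int. fst (X n) = z * fst (X (n + 1)) + z * u n * snd (X (n + 1)) \<and>
               snd (X n) = inverse z * v n * fst (X (n + 1)) + inverse z * snd (X (n + 1)))"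

definition rapidly_decaying :: "(int \<Rightarrow> complex) \<Rightarrow> bool" where
  "rapidly_decaying u \<longleftrightarrow>
     (\<forall>k::nat. ((\<lambda>n::int. of_int \<bar>n\<bar> ^ k * u n) \<longlongrightarrow> 0) at_top \<and>
               ((\<lambda>n::int. of_int \<bar>n\<bar> ^ k * u n) \<longlongrightarrow> 0) at_bot)"

definition Dn :: "(int \<Rightarrow> complex) \<Rightarrow> (int \<Rightarrow> complex) \<Rightarrow> int \<Rightarrow> complex" where
  "Dn u v n = (\<Prod>k::nat. 1 - u (n - int k) * v (n - int k))"

text \<open>D_inf = prod_{j = -\<infinity>}^{\<infinity>} (1 - u_j v_j) = D_{-1} * prod_{j = 0}^{\<infinity>} (1 - u_j v_j)\<close>
definition Dinf :: "(int \<Rightarrow> complex) \<Rightarrow> (int \<Rightarrow> complex) \<Rightarrow> complex" where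
  "Dinf u v = Dn u v (-1) * (\<Prod>k::nat. 1 - u (int k) * v (int k))"

definition lin_dep2 :: "complex \<times> complex \<Rightarrow> complex \<times> complex \<Rightarrow> bool" where
  "lin_dep2 x y \<longleftrightarrow> (\<exists>\<alpha> \<beta>. (\<alpha>, \<beta>) \<noteq> (0, 0) \<and>
      \<alpha> * fst x + \<beta> * fst y = 0 \<and> \<alpha> * snd x + \<beta> * snd y = 0)"

end

theory Submission
  imports Defs
begin


lemma det2_scalev: "det2 (scalev a x) (scalev b y) = a * b * det2 x y"
  by (simp add: det2_def scalev_def algebra_simps)

lemma lin_dep2_iff: "lin_dep2 x y \<longleftrightarrow> det2 x y = 0"
proof
  assume "lin_dep2 x y"
  then obtain a b where ab: "(a, b) \<noteq> (0, 0)" "a * fst x + b * fst y = 0" "a * snd x + b * snd y = 0"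
    unfolding lin_dep2_def by blast
  have "a * det2 x y = (a * fst x + b * fst y) * snd y - (a * snd x + b * snd y) * fst y"
    by (simp add: det2_def algebra_simps)
  then have 1: "a * det2 x y = 0" using ab by simp
  have "b * det2 x y = fst x * (a * snd x + b * snd y) - snd x * (a * fst x + b * fst y)"
    by (simp add: det2_def algebra_simps)
  then have 2: "b * det2 x y = 0" using ab by simp
  from 1 2 show "det2 x y = 0" using ab by auto
next
  assume d: "det2 x y = 0"
  show "lin_dep2 x y"
  proof (cases "snd y = 0 \<and> snd x = 0")
    case False
    then show ?thesis unfolding lin_dep2_def
      using d by (intro exI[of _ "snd y"] exI[of _ "- snd x"]) (auto simp: det2_def algebra_simps)
  next
    case True
    show ?thesis
    proof (cases "fst y = 0 \<and> fst x = 0")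
      case False
      then show ?thesis unfolding lin_dep2_def
        using True by (intro exI[of _ "fst y"] exI[of _ "- fst x"]) (auto simp: algebra_simps)
    next
      case True2: True
      then show ?thesis unfolding lin_dep2_def using True
        by (intro exI[of _ 1] exI[of _ 0]) auto
    qed
  qed
qed

lemma wr_step:
  assumes "is_solution u v z X" "is_solution u v z Y" "z \<noteq> 0"
  shows "det2 (X n) (Y n) = (1 - u n * v n) * det2 (X (n+1)) (Y (n+1))"
proof -
  have X1: "fst (X n) = z * fst (X (n + 1)) + z * u n * snd (X (n + 1))"
   and X2: "snd (X n) = inverse z * v n * fst (X (n + 1)) + inverse z * snd (X (n + 1))"
    using assms(1) unfolding is_solution_def by blast+
  have Y1: "fst (Y n) = z * fst (Y (n + 1)) + z * u n * snd (Y (n + 1))"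
   and Y2: "snd (Y n) = inverse z * v n * fst (Y (n + 1)) + inverse z * snd (Y (n + 1))"
    using assms(2) unfolding is_solution_def by blast+
  have "det2 (X n) (Y n) = (z * inverse z) * ((1 - u n * v n) * det2 (X (n+1)) (Y (n+1)))"
    unfolding det2_def X1 X2 Y1 Y2 by (simp add: algebra_simps)
  also have "z * inverse z = 1" using assms(3) by simp
  finally show ?thesis by simp
qed



lemma summable_decay:
  fixes w :: "int \<Rightarrow> complex" and h :: "nat \<Rightarrow> int"
  assumes lim: "((\<lambda>k. of_int \<bar>h k\<bar> ^ 2 * w (h k)) \<longlongrightarrow> 0) sequentially"
    and hb: "\<forall>\<^sub>F k in sequentially. real k \<le> 2 * of_int \<bar>h k\<bar>"
  shows "summable (\<lambda>k. norm (w (h k)))"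
proof (rule summable_comparison_test_ev)
  have ev1: "\<forall>\<^sub>F k in sequentially. norm (of_int \<bar>h k\<bar> ^ 2 * w (h k)) < 1"
    using lim by (simp add: tendsto_iff dist_norm del: norm_mult) 
  show "\<forall>\<^sub>F k in sequentially. norm (norm (w (h k))) \<le> 4 * inverse (of_nat k ^ 2)"
    using ev1 hb eventually_gt_at_top[of "0::nat"]
  proof eventually_elim
    case (elim k)
    have hk: "real k / 2 \<le> real_of_int \<bar>h k\<bar>" using elim by simp
    have kp: "0 < real k" using elim by simp
    have hp: "0 < real_of_int \<bar>h k\<bar>" using hk kp by linarith
    have "real_of_int \<bar>h k\<bar> ^ 2 * norm (w (h k)) < 1"
      using elim(1) by (simp add: norm_mult norm_power)
    then have a: "norm (w (h k)) \<le> 1 / real_of_int \<bar>h k\<bar> ^ 2"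
      using hp by (simp add: field_simps)
    have "(real k / 2) ^ 2 \<le> real_of_int \<bar>h k\<bar> ^ 2"
      using hk kp by (intro power_mono) auto
    then have "1 / real_of_int \<bar>h k\<bar> ^ 2 \<le> 1 / (real k / 2) ^ 2"
      using kp hp by (intro divide_left_mono mult_pos_pos) auto
    also have "\<dots> = 4 * inverse (real k ^ 2)" by (simp add: field_simps)
    finally show ?case using a by simp
  qed
  show "summable (\<lambda>k. 4 * inverse (real k ^ 2))"
    by (intro summable_mult inverse_power_summable) auto
qed

lemma rd_prod_lim:
  assumes "rapidly_decaying u" "rapidly_decaying v"
  shows "((\<lambda>n. of_int \<bar>n\<bar> ^ 2 * (u n * v n)) \<longlongrightarrow> 0) at_bot"
        "((\<lambda>n. of_int \<bar>n\<bar> ^ 2 * (u n * v n)) \<longlongrightarrow> 0) at_top"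
proof -
  have u2: "((\<lambda>n. of_int \<bar>n\<bar> ^ 2 * u n) \<longlongrightarrow> 0) at_bot" "((\<lambda>n. of_int \<bar>n\<bar> ^ 2 * u n) \<longlongrightarrow> 0) at_top"
    using assms(1) unfolding rapidly_decaying_def by blast+
  have v0: "((\<lambda>n. of_int \<bar>n\<bar> ^ 0 * v n) \<longlongrightarrow> 0) at_bot" "((\<lambda>n. of_int \<bar>n\<bar> ^ 0 * v n) \<longlongrightarrow> 0) at_top"
    using assms(2) unfolding rapidly_decaying_def by blast+
  show "((\<lambda>n. of_int \<bar>n\<bar> ^ 2 * (u n * v n)) \<longlongrightarrow> 0) at_bot"
    using tendsto_mult[OF u2(1) v0(1)] by (simp add: mult.assoc)
  show "((\<lambda>n. of_int \<bar>n\<bar> ^ 2 * (u n * v n)) \<longlongrightarrow> 0) at_top"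
    using tendsto_mult[OF u2(2) v0(2)] by (simp add: mult.assoc)
qed

lemma conv_prod_bot:
  assumes "rapidly_decaying u" "rapidly_decaying v" "\<And>n. 1 - u n * v n \<noteq> 0"
  shows "convergent_prod (\<lambda>k::nat. 1 - u (m - int k) * v (m - int k))"
proof -
  have fl: "filterlim (\<lambda>k::nat. m - int k) at_bot sequentially"
    unfolding filterlim_at_bot
  proof
    fix Z :: int
    show "\<forall>\<^sub>F k in sequentially. m - int k \<le> Z"
      using eventually_ge_at_top[of "nat (m - Z)"] by eventually_elim linarith
  qed
  have lim: "((\<lambda>k. of_int \<bar>m - int k\<bar> ^ 2 * (u (m - int k) * v (m - int k))) \<longlongrightarrow> 0) sequentially"
    using filterlim_compose[OF rd_prod_lim(1)[OF assms(1,2)] fl] by simp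
  have hb: "\<forall>\<^sub>F k in sequentially. real k \<le> 2 * of_int \<bar>m - int k\<bar>"
    using eventually_ge_at_top[of "nat (2 * \<bar>m\<bar>)"]
  proof eventually_elim
    case (elim k)
    have "2 * \<bar>m\<bar> \<le> int k" using elim by (simp add: nat_le_iff)
    then have "int k \<le> 2 * \<bar>m - int k\<bar>" by arith
    then have "real_of_int (int k) \<le> real_of_int (2 * \<bar>m - int k\<bar>)" by (simp only: of_int_le_iff)
    then show ?case by simp
  qed
  have "summable (\<lambda>k. norm (- (u (m - int k) * v (m - int k))))"
    using summable_decay[where w="\<lambda>n. u n * v n", OF lim hb] by simp
  moreover have "\<And>k. - (u (m - int k) * v (m - int k)) \<noteq> -1"
    using assms(3) by (metis eq_iff_diff_eq_0 minus_equation_iff)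
  ultimately have "convergent_prod (\<lambda>k. 1 + - (u (m - int k) * v (m - int k)))"
    by (rule summable_imp_convergent_prod_complex)
  then show ?thesis by simp
qed

lemma conv_prod_top:
  assumes "rapidly_decaying u" "rapidly_decaying v" "\<And>n. 1 - u n * v n \<noteq> 0"
  shows "convergent_prod (\<lambda>k::nat. 1 - u (int k) * v (int k))"
proof -
  have lim: "((\<lambda>k. of_int \<bar>int k\<bar> ^ 2 * (u (int k) * v (int k))) \<longlongrightarrow> 0) sequentially"
    using filterlim_compose[OF rd_prod_lim(2)[OF assms(1,2)] filterlim_int_sequentially] by simp
  have hb: "\<forall>\<^sub>F k in sequentially. real k \<le> 2 * of_int \<bar>int k\<bar>"
    by simp
  have "summable (\<lambda>k. norm (- (u (int k) * v (int k))))"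
    using summable_decay[where w="\<lambda>n. u n * v n", OF lim hb] by simp
  moreover have "\<And>k. - (u (int k) * v (int k)) \<noteq> -1"
    using assms(3) by (metis eq_iff_diff_eq_0 minus_equation_iff)
  ultimately have "convergent_prod (\<lambda>k. 1 + - (u (int k) * v (int k)))"
    by (rule summable_imp_convergent_prod_complex)
  then show ?thesis by simp
qed

lemma Dn_nonzero:
  assumes "rapidly_decaying u" "rapidly_decaying v" "\<And>n. 1 - u n * v n \<noteq> 0"
  shows "Dn u v m \<noteq> 0"
  unfolding Dn_def using conv_prod_bot[OF assms] assms(3) by (intro prodinf_nonzero) auto

lemma Dinf_nonzero:
  assumes "rapidly_decaying u" "rapidly_decaying v" "\<And>n. 1 - u n * v n \<noteq> 0"
  shows "Dinf u v \<noteq> 0"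
  unfolding Dinf_def using Dn_nonzero[OF assms] conv_prod_top[OF assms] assms(3)
  by (simp add: prodinf_nonzero)

lemma Dn_step:
  assumes "rapidly_decaying u" "rapidly_decaying v" "\<And>n. 1 - u n * v n \<noteq> 0"
  shows "Dn u v (m + 1) = (1 - u (m+1) * v (m+1)) * Dn u v m"
proof -
  define g where "g = (\<lambda>k::nat. 1 - u (m + 1 - int k) * v (m + 1 - int k))"
  have "(\<lambda>k::nat. 1 - u (m - int k) * v (m - int k)) has_prod Dn u v m"
    unfolding Dn_def using conv_prod_bot[OF assms] by blast
  moreover have "(\<lambda>k::nat. 1 - u (m - int k) * v (m - int k)) = (\<lambda>k. g (Suc k))"
    by (auto simp: g_def)
  ultimately have "(\<lambda>k. g (Suc k)) has_prod Dn u v m" by simp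
  from has_prod_Suc_imp[OF this] have "g has_prod (Dn u v m * g 0)" .
  then have "Dn u v (m+1) = Dn u v m * g 0" unfolding Dn_def g_def by (simp add: has_prod_iff)
  then show ?thesis by (simp add: g_def)
qed



lemma wr_prod:
  assumes "is_solution u v z X" "is_solution u v z Y" "z \<noteq> 0"
  shows "det2 (X 0) (Y 0) = (\<Prod>i\<le>N. 1 - u (int i) * v (int i)) * det2 (X (int N + 1)) (Y (int N + 1))"
proof (induction N)
  case 0
  then show ?case using wr_step[OF assms, of 0] by simp
next
  case (Suc N)
  define W where "W = (\<lambda>n. det2 (X n) (Y n))"
  define F where "F = (\<lambda>n. 1 - u n * v n)"
  have st: "W (int N + 1) = F (int N + 1) * W (int (Suc N) + 1)"
  proof -
    have e: "int (Suc N) + 1 = int N + 1 + 1" by simp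
    show ?thesis unfolding W_def F_def e by (rule wr_step[OF assms])
  qed
  have pr: "(\<Prod>i\<le>Suc N. F (int i)) = (\<Prod>i\<le>N. F (int i)) * F (int N + 1)"
    by (simp add: add.commute)
  have "W 0 = (\<Prod>i\<le>N. F (int i)) * W (int N + 1)" using Suc unfolding W_def F_def .
  also have "\<dots> = (\<Prod>i\<le>Suc N. F (int i)) * W (int (Suc N) + 1)"
    unfolding st pr by (simp add: mult_ac)
  finally show ?case unfolding W_def F_def .
qed

lemma seq_shift_lim:
  assumes "(g \<longlongrightarrow> L) at_top"
  shows "((\<lambda>N::nat. g (int N + 1)) \<longlongrightarrow> L) sequentially"
proof -
  have "filterlim (\<lambda>N::nat. int N + 1) at_top sequentially"
    unfolding filterlim_at_top
  proof
    fix Z :: int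
    show "\<forall>\<^sub>F N in sequentially. Z \<le> int N + 1"
      using eventually_ge_at_top[of "nat Z"] by eventually_elim linarith
  qed
  from filterlim_compose[OF assms this] show ?thesis by simp
qed

lemma wr_lim:
  assumes "rapidly_decaying u" "rapidly_decaying v" "\<And>n. 1 - u n * v n \<noteq> 0"
    and "is_solution u v z X" "is_solution u v z Y" "z \<noteq> 0"
  shows "((\<lambda>N. det2 (X (int N + 1)) (Y (int N + 1))) \<longlongrightarrow>
           det2 (X 0) (Y 0) / prodinf (\<lambda>k::nat. 1 - u (int k) * v (int k))) sequentially"
proof -
  define P where "P = prodinf (\<lambda>k::nat. 1 - u (int k) * v (int k))"
  have cp: "convergent_prod (\<lambda>k::nat. 1 - u (int k) * v (int k))" by (rule conv_prod_top[OF assms(1-3)])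
  have Pnz: "P \<noteq> 0" unfolding P_def using cp assms(3) by (intro prodinf_nonzero) auto
  have lim: "(\<lambda>N. \<Prod>i\<le>N. 1 - u (int i) * v (int i)) \<longlonglongrightarrow> P"
    unfolding P_def using cp by (intro has_prod_imp_tendsto) blast
  have nz: "(\<Prod>i\<le>N. 1 - u (int i) * v (int i)) \<noteq> 0" for N
    using assms(3) by (simp add: prod_zero_iff)
  have eq: "det2 (X (int N + 1)) (Y (int N + 1)) = det2 (X 0) (Y 0) / (\<Prod>i\<le>N. 1 - u (int i) * v (int i))" for N
    using wr_prod[OF assms(4-6), of N] nz[of N] by (simp add: field_simps)
  show ?thesis unfolding eq P_def[symmetric]
    by (intro tendsto_intros lim Pnz)
qed

lemma norm_one_powi: "norm (z::complex) = 1 \<Longrightarrow> norm (z powi n) = 1"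
  by (simp add: norm_power_int)

lemma powi_cancel: "(z::complex) \<noteq> 0 \<Longrightarrow> z powi n * z powi (- n) = 1"
  by (simp add: power_int_minus field_simps)



lemma cross_lims:
  assumes rd: "rapidly_decaying u" "rapidly_decaying v" "\<And>n. 1 - u n * v n \<noteq> 0"
    and sol: "is_solution u v z A" "is_solution u v z B" "is_solution u v z C"
    and z1: "norm z = 1"
    and B1: "((\<lambda>n. fst (B n) * z powi n) \<longlongrightarrow> 1) at_top"
    and B2: "((\<lambda>n. snd (B n)) \<longlongrightarrow> 0) at_top"
    and C1: "((\<lambda>n. fst (C n)) \<longlongrightarrow> 0) at_top"
    and C2: "((\<lambda>n. snd (C n) * z powi (- n)) \<longlongrightarrow> 1) at_top"
  shows "((\<lambda>N. snd (A (int N + 1)) * fst (C (int N + 1))) \<longlongrightarrow> 0) sequentially"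
        "((\<lambda>N. fst (A (int N + 1)) * snd (B (int N + 1))) \<longlongrightarrow> 0) sequentially"
proof -
  have z0: "z \<noteq> 0" using z1 by auto
  define s where "s = (\<lambda>N::nat. int N + 1)"
  define a1 where "a1 = (\<lambda>N. fst (A (s N)))"
  define a2 where "a2 = (\<lambda>N. snd (A (s N)))"
  define b1 where "b1 = (\<lambda>N. fst (B (s N)))"
  define b2 where "b2 = (\<lambda>N. snd (B (s N)))"
  define c1 where "c1 = (\<lambda>N. fst (C (s N)))"
  define c2 where "c2 = (\<lambda>N. snd (C (s N)))"
  define p where "p = (\<lambda>N. z powi (s N))"
  define q where "q = (\<lambda>N. z powi (- s N))"
  have pq: "p N * q N = 1" for N unfolding p_def q_def using powi_cancel[OF z0] by simp
  have np: "norm (p N) = 1" "norm (q N) = 1" for N unfolding p_def q_def using norm_one_powi[OF z1] by auto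
  have lb1: "(\<lambda>N. b1 N * p N) \<longlonglongrightarrow> 1" unfolding b1_def p_def s_def using seq_shift_lim[OF B1] by simp
  have lb2: "b2 \<longlonglongrightarrow> 0" unfolding b2_def s_def using seq_shift_lim[OF B2] by simp
  have lc1: "c1 \<longlonglongrightarrow> 0" unfolding c1_def s_def using seq_shift_lim[OF C1] by simp
  have lc2: "(\<lambda>N. c2 N * q N) \<longlonglongrightarrow> 1" unfolding c2_def q_def s_def using seq_shift_lim[OF C2] by simp
  have lb2q: "(\<lambda>N. b2 N * q N) \<longlonglongrightarrow> 0"
  proof -
    have "(\<lambda>N. norm (b2 N * q N)) \<longlonglongrightarrow> 0"
      using lb2 by (simp add: norm_mult np tendsto_norm_zero)
    then show ?thesis by (simp add: tendsto_norm_zero_iff)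
  qed
  have lc1p: "(\<lambda>N. c1 N * p N) \<longlonglongrightarrow> 0"
  proof -
    have "(\<lambda>N. norm (c1 N * p N)) \<longlonglongrightarrow> 0"
      using lc1 by (simp add: norm_mult np tendsto_norm_zero)
    then show ?thesis by (simp add: tendsto_norm_zero_iff)
  qed
  have e1: "b1 N * b2 N = (b1 N * p N) * (b2 N * q N)" for N
  proof -
    have "(b1 N * p N) * (b2 N * q N) = (b1 N * b2 N) * (p N * q N)" by (simp add: mult_ac)
    then show ?thesis using pq[of N] by simp
  qed
  have e2: "c2 N * c1 N = (c2 N * q N) * (c1 N * p N)" for N
  proof -
    have "(c2 N * q N) * (c1 N * p N) = (c2 N * c1 N) * (p N * q N)" by (simp add: mult_ac)
    then show ?thesis using pq[of N] by simp
  qed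
  have lbb: "(\<lambda>N. b1 N * b2 N) \<longlonglongrightarrow> 0" unfolding e1 using tendsto_mult[OF lb1 lb2q] by simp
  have lcc: "(\<lambda>N. c2 N * c1 N) \<longlonglongrightarrow> 0" unfolding e2 using tendsto_mult[OF lc2 lc1p] by simp
  have lbc: "(\<lambda>N. b2 N * c1 N) \<longlonglongrightarrow> 0" using tendsto_mult[OF lb2 lc1] by simp
  define dBC where "dBC = (\<lambda>N. det2 (B (s N)) (C (s N)))"
  define dAC where "dAC = (\<lambda>N. det2 (A (s N)) (C (s N)))"
  define dAB where "dAB = (\<lambda>N. det2 (A (s N)) (B (s N)))"
  have e3: "dBC N = (b1 N * p N) * (c2 N * q N) - b2 N * c1 N" for N
  proof -
    have "(b1 N * p N) * (c2 N * q N) = (b1 N * c2 N) * (p N * q N)" by (simp add: mult_ac)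
    then show ?thesis unfolding dBC_def det2_def b1_def b2_def c1_def c2_def using pq[of N] by simp
  qed
  have ldBC: "dBC \<longlonglongrightarrow> 1" unfolding e3 using tendsto_diff[OF tendsto_mult[OF lb1 lc2] lbc] by simp
  have ldAC: "convergent dAC" unfolding dAC_def s_def convergent_def
    using wr_lim[OF rd sol(1) sol(3) z0] by blast
  have ldAB: "convergent dAB" unfolding dAB_def s_def convergent_def
    using wr_lim[OF rd sol(1) sol(2) z0] by blast
  have ev: "\<forall>\<^sub>F N in sequentially. dBC N \<noteq> 0"
    using tendsto_imp_eventually_ne[OF ldBC] by simp
  have id1: "dBC N * (a2 N * c1 N) = dAC N * (b2 N * c1 N) - dAB N * (c2 N * c1 N)" for N
    unfolding dBC_def dAC_def dAB_def det2_def a2_def b2_def c1_def c2_def a1_def b1_def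
    by (simp add: algebra_simps)
  have id2: "dBC N * (a1 N * b2 N) = dAC N * (b1 N * b2 N) - dAB N * (c1 N * b2 N)" for N
    unfolding dBC_def dAC_def dAB_def det2_def a2_def b2_def c1_def c2_def a1_def b1_def
    by (simp add: algebra_simps)
  have l1: "(\<lambda>N. (dAC N * (b2 N * c1 N) - dAB N * (c2 N * c1 N)) / dBC N) \<longlonglongrightarrow> (lim dAC * 0 - lim dAB * 0) / 1"
    using ldAC ldAB by (intro tendsto_intros lbc lcc ldBC) (auto simp: convergent_LIMSEQ_iff)
  have l2: "(\<lambda>N. (dAC N * (b1 N * b2 N) - dAB N * (c1 N * b2 N)) / dBC N) \<longlonglongrightarrow> (lim dAC * 0 - lim dAB * 0) / 1"
    using ldAC ldAB lbc by (intro tendsto_intros lbb ldBC) (auto simp: convergent_LIMSEQ_iff mult.commute)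
  have "\<forall>\<^sub>F N in sequentially. (dAC N * (b2 N * c1 N) - dAB N * (c2 N * c1 N)) / dBC N = a2 N * c1 N"
    using ev by eventually_elim (simp only: id1[symmetric], simp)
  from Lim_transform_eventually[OF l1 this] have "(\<lambda>N. a2 N * c1 N) \<longlonglongrightarrow> 0" by simp
  then show "((\<lambda>N. snd (A (int N + 1)) * fst (C (int N + 1))) \<longlongrightarrow> 0) sequentially"
    by (simp add: a2_def c1_def s_def)
  have "\<forall>\<^sub>F N in sequentially. (dAC N * (b1 N * b2 N) - dAB N * (c1 N * b2 N)) / dBC N = a1 N * b2 N"
    using ev by eventually_elim (simp only: id2[symmetric], simp)
  from Lim_transform_eventually[OF l2 this] have "(\<lambda>N. a1 N * b2 N) \<longlonglongrightarrow> 0" by simp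
  then show "((\<lambda>N. fst (A (int N + 1)) * snd (B (int N + 1))) \<longlongrightarrow> 0) sequentially"
    by (simp add: a1_def b2_def s_def)
qed



lemma wr_const:
  assumes rd: "rapidly_decaying u" "rapidly_decaying v" "\<And>n. 1 - u n * v n \<noteq> 0"
    and "is_solution u v z X" "is_solution u v z Y" "z \<noteq> 0"
  shows "det2 (X n) (Y n) * Dn u v (n - 1) = det2 (X 0) (Y 0) * Dn u v (- 1)"
proof -
  define Q where "Q = (\<lambda>n. det2 (X n) (Y n) * Dn u v (n - 1))"
  have step: "Q n = Q (n + 1)" for n
  proof -
    have "Q n = (1 - u n * v n) * det2 (X (n+1)) (Y (n+1)) * Dn u v (n - 1)"
      unfolding Q_def by (subst wr_step[OF assms(4-6), of n]) (rule refl)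
    also have "\<dots> = det2 (X (n+1)) (Y (n+1)) * Dn u v (n - 1 + 1)"
      using Dn_step[OF rd, of "n - 1"] by simp
    finally show ?thesis unfolding Q_def by simp
  qed
  have "Q n = Q 0"
  proof (induction n rule: int_induct[where k=0])
    case base then show ?case by simp
  next
    case (step1 i) then show ?case using step[of i] by simp
  next
    case (step2 i) then show ?case using step[of "i - 1"] by simp
  qed
  then show ?thesis unfolding Q_def by simp
qed



lemma disk_zero:
  assumes hol: "g holomorphic_on ball 0 1" and cont: "continuous_on (cball 0 1) g"
    and bd: "\<And>z. cmod z = 1 \<Longrightarrow> g z = 0" and z: "z \<in> cball (0::complex) 1"
  shows "g z = 0"
proof -
  have "norm (g z) \<le> 0"
  proof (rule maximum_modulus_frontier[of g "cball 0 1"])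
    show "g holomorphic_on interior (cball 0 1)" using hol by simp
    show "continuous_on (closure (cball 0 1)) g" using cont by simp
    show "bounded (cball (0::complex) 1)" by simp
    show "norm (g w) \<le> 0" if "w \<in> frontier (cball 0 1)" for w
      using that bd by (simp add: frontier_cball)
    show "z \<in> cball 0 1" by (rule z)
  qed
  then show ?thesis by simp
qed

lemma norm_exp_i: "cmod (exp (\<i> * \<zeta>)) = exp (- Im \<zeta>)"
  by (simp add: norm_exp_eq_Re)

lemma ext_zero:
  assumes hol: "g holomorphic_on {z. 1 < cmod z}" and cont: "continuous_on {z. 1 \<le> cmod z} g"
    and bd: "\<And>z. cmod z = 1 \<Longrightarrow> g z = 0" and z: "1 \<le> cmod z"
  shows "g z = 0"
proof -
  define E where "E = (\<lambda>\<zeta>. exp (\<i> * \<zeta>))"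
  have nE: "cmod (E \<zeta>) = exp (- Im \<zeta>)" for \<zeta> unfolding E_def by (rule norm_exp_i)
  define H where "H = (\<lambda>\<zeta>. if Im \<zeta> \<le> 0 then g (E \<zeta>) else 0)"
  have contE: "continuous_on A E" for A unfolding E_def by (intro continuous_intros)
  have contH: "continuous_on UNIV H"
    unfolding H_def
  proof (rule continuous_on_cases_le)
    have "continuous_on {x \<in> UNIV. Im x \<le> 0} (g \<circ> E)"
    proof (rule continuous_on_compose)
      show "continuous_on {x \<in> UNIV. Im x \<le> 0} E" by (rule contE)
      show "continuous_on (E ` {x \<in> UNIV. Im x \<le> 0}) g"
        by (rule continuous_on_subset[OF cont]) (auto simp: nE)
    qed
    then show "continuous_on {x \<in> UNIV. Im x \<le> 0} (\<lambda>x. g (E x))" by (simp add: o_def)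
    show "continuous_on {x \<in> UNIV. 0 \<le> Im x} (\<lambda>x. 0)" by simp
    show "continuous_on UNIV Im" by (intro continuous_intros)
    show "g (E x) = 0" if "x \<in> UNIV" "Im x = 0" for x
      using that by (intro bd) (simp add: nE)
  qed
  have holH: "H holomorphic_on UNIV"
  proof (rule holomorphic_on_paste_across_line[where d = \<i> and k = 0])
    show "open (UNIV :: complex set)" by simp
    show "\<i> \<noteq> 0" by simp
    show "continuous_on UNIV H" by (rule contH)
    have "(g \<circ> E) holomorphic_on {z. Im z < 0}"
    proof (rule holomorphic_on_compose)
      show "E holomorphic_on {z. Im z < 0}" unfolding E_def by (intro holomorphic_intros)
      show "g holomorphic_on E ` {z. Im z < 0}"
        by (rule holomorphic_on_subset[OF hol]) (auto simp: nE)
    qed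
    then show "H holomorphic_on UNIV \<inter> {z. \<i> \<bullet> z < 0}"
      by (rule holomorphic_cong[THEN iffD1, rotated 2]) (auto simp: H_def)
    have "(\<lambda>_. 0) holomorphic_on {z. 0 < Im z}" by simp
    then show "H holomorphic_on UNIV \<inter> {z. 0 < \<i> \<bullet> z}"
      by (rule holomorphic_cong[THEN iffD1, rotated 2]) (auto simp: H_def)
  qed
  have H0: "H \<zeta> = 0" for \<zeta>
  proof (rule analytic_continuation_open[where s = "{z. 0 < Im z}" and s' = UNIV and f = H and g = "\<lambda>_. 0" and z = \<zeta>])
    show "open {z. 0 < Im z}" by (rule open_halfspace_Im_gt)
    show "{z. 0 < Im z} \<noteq> {}" by (auto intro!: exI[of _ \<i>])
  qed (auto simp: H_def holH[unfolded H_def])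
  have z0: "z \<noteq> 0" using z by auto
  define \<zeta> where "\<zeta> = - \<i> * Ln z"
  have "E \<zeta> = z" unfolding E_def \<zeta>_def using z0 by simp
  moreover have "Im \<zeta> \<le> 0" unfolding \<zeta>_def using z z0 by (simp add: Re_Ln)
  ultimately show ?thesis using H0[of \<zeta>] by (simp add: H_def)
qed

lemma deriv_vanish:
  assumes hol: "f holomorphic_on S" and S: "open S" and w: "w \<in> S"
    and pole: "is_pole (\<lambda>z. inverse (f z)) w"
    and ord: "zorder (\<lambda>z. inverse (f z)) w = - int m" and k: "k < m"
  shows "(deriv ^^ k) f w = 0"
proof -
  obtain r where r: "r > 0" "ball w r \<subseteq> S" using S w openE by blast
  have ev: "\<forall>\<^sub>F z in at w. f z \<noteq> 0"
    using non_zero_neighbour_pole[OF pole] by (auto elim!: eventually_mono)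
  have an: "f analytic_on {w}"
    using hol S w analytic_at by blast
  have "zorder (\<lambda>z. inverse (f z)) w = - zorder f w"
  proof (rule zorder_inverse)
    show "isolated_singularity_at f w" by (rule isolated_singularity_at_analytic[OF an])
    show "not_essential f w" by (rule not_essential_analytic[OF an])
    show "\<exists>\<^sub>F z in at w. f z \<noteq> 0" using ev by (simp add: eventually_frequently)
  qed
  with ord have zf: "zorder f w = int m" by simp
  have "\<forall>\<^sub>F z in at w. f z \<noteq> 0 \<and> z \<in> ball w r"
    using ev eventually_at_in_open'[of "ball w r" w] r(1) by (auto elim: eventually_elim2)
  then have "\<exists>\<^sub>F z in at w. f z \<noteq> 0 \<and> z \<in> ball w r" by (simp add: eventually_frequently)
  then obtain w' where w': "f w' \<noteq> 0" "w' \<in> ball w r" using frequently_ex by blast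
  have holb: "f holomorphic_on ball w r" using hol r(2) holomorphic_on_subset by blast
  have ze: "(if f w = 0 then zorder f w > 0 else zorder f w = 0) \<and> (\<exists>r'. r' > 0 \<and> cball w r' \<subseteq> ball w r \<and> zor_poly f w holomorphic_on cball w r'
    \<and> (\<forall>z\<in>cball w r'. f z = zor_poly f w z * (z - w) ^ nat (zorder f w) \<and> zor_poly f w z \<noteq> 0))"
    by (rule zorder_exist_zero[OF holb open_ball connected_ball]) (use r(1) w' in auto)
  then obtain r' where r': "r' > 0" "cball w r' \<subseteq> ball w r" "zor_poly f w holomorphic_on cball w r'"
     "\<forall>z\<in>cball w r'. f z = zor_poly f w z * (z - w) ^ nat (zorder f w) \<and> zor_poly f w z \<noteq> 0"
    by blast
  define g where "g = zor_poly f w"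
  have fe: "\<forall>z\<in>cball w r'. f z = (z - w) ^ m * g z" using r'(4) zf by (simp add: g_def mult.commute)
  have holg: "g holomorphic_on ball w r'" using r'(3) g_def holomorphic_on_subset by auto
  have "eventually (\<lambda>z. z \<in> ball w r') (nhds w)"
    using r'(1) by (intro eventually_nhds_in_open) auto
  then have "eventually (\<lambda>z. f z = (z - w) ^ m * g z) (nhds w)"
    using fe by (auto elim!: eventually_mono)
  then have "(deriv ^^ k) f w = (deriv ^^ k) (\<lambda>z. (z - w) ^ m * g z) w"
    by (intro higher_deriv_cong_ev) auto
  also have "\<dots> = (\<Sum>j=0..k. of_nat (k choose j) * (deriv ^^ j) (\<lambda>z. (z - w) ^ m) w * (deriv ^^ (k - j)) g w)"
    using holg r'(1) by (intro higher_deriv_mult[of _ "ball w r'"]) (auto intro!: holomorphic_intros)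
  also have "\<dots> = 0"
  proof (intro sum.neutral ballI)
    fix j assume "j \<in> {0..k}"
    then have "j < m" using k by auto
    then have "(deriv ^^ j) (\<lambda>z. (z - w) ^ m) w = 0"
      by (subst higher_deriv_power) auto
    then show "of_nat (k choose j) * (deriv ^^ j) (\<lambda>z. (z - w) ^ m) w * (deriv ^^ (k - j)) g w = 0"
      by simp
  qed
  finally show ?thesis .
qed



lemma W_formula:
  assumes rd: "rapidly_decaying u" "rapidly_decaying v" "\<And>n. 1 - u n * v n \<noteq> 0"
    and sol: "is_solution u v z X" "is_solution u v z Y" and z0: "z \<noteq> 0"
    and lim: "(\<lambda>N. det2 (X (int N + 1)) (Y (int N + 1))) \<longlonglongrightarrow> L"
  shows "det2 (X n) (Y n) = Dinf u v / Dn u v (n - 1) * L"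
proof -
  define P where "P = prodinf (\<lambda>k::nat. 1 - u (int k) * v (int k))"
  have Pnz: "P \<noteq> 0" unfolding P_def using conv_prod_top[OF rd] rd(3) by (intro prodinf_nonzero) auto
  have "det2 (X 0) (Y 0) / P = L"
    using LIMSEQ_unique[OF wr_lim[OF rd sol z0] lim] by (simp add: P_def)
  then have W0: "det2 (X 0) (Y 0) = L * P" using Pnz by (simp add: field_simps)
  have "det2 (X n) (Y n) * Dn u v (n - 1) = det2 (X 0) (Y 0) * Dn u v (- 1)"
    by (rule wr_const[OF rd sol z0])
  also have "\<dots> = L * Dinf u v" unfolding W0 Dinf_def P_def by (simp add: mult_ac)
  finally show ?thesis using Dn_nonzero[OF rd, of "n - 1"] by (simp add: field_simps)
qed

lemma open_ext: "open {z::complex. 1 < cmod z}"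
proof -
  have "{z::complex. 1 < cmod z} = - cball 0 1" by auto
  then show ?thesis using closed_cball[of "0::complex" 1] by (simp add: open_Compl)
qed



theorem theorem2p10:
  fixes u v :: "int \<Rightarrow> complex"
    and Psi Phi PsiB PhiB :: "complex \<Rightarrow> int \<Rightarrow> complex \<times> complex"
    and invT invTB :: "complex \<Rightarrow> complex"
  assumes decay_u: "rapidly_decaying u"
    and decay_v: "rapidly_decaying v"
    and nonzero: "\<And>n. 1 - u n * v n \<noteq> 0"
    \<comment> \<open>Psi z n = z^(-n) psi_n, Phi z n = z^n phi_n, invT = 1/T_r: analytic in |z|<1,
        continuous on |z|\<le>1\<close>
    and Psi_hol: "\<And>n. (\<lambda>z. fst (Psi z n)) holomorphic_on ball 0 1 \<and> (\<lambda>z. snd (Psi z n)) holomorphic_on ball 0 1"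
    and Psi_cont: "\<And>n. continuous_on (cball 0 1) (\<lambda>z. fst (Psi z n)) \<and> continuous_on (cball 0 1) (\<lambda>z. snd (Psi z n))"
    and Phi_hol: "\<And>n. (\<lambda>z. fst (Phi z n)) holomorphic_on ball 0 1 \<and> (\<lambda>z. snd (Phi z n)) holomorphic_on ball 0 1"
    and Phi_cont: "\<And>n. continuous_on (cball 0 1) (\<lambda>z. fst (Phi z n)) \<and> continuous_on (cball 0 1) (\<lambda>z. snd (Phi z n))"
    and invT_hol: "invT holomorphic_on ball 0 1"
    and invT_cont: "continuous_on (cball 0 1) invT"
    \<comment> \<open>PsiB z n = z^n psibar_n, PhiB z n = z^(-n) phibar_n, invTB = 1/Tbar_r: analytic in |z|>1,
        continuous on |z|\<ge>1\<close>
    and PsiB_hol: "\<And>n. (\<lambda>z. fst (PsiB z n)) holomorphic_on {z. 1 < cmod z} \<and> (\<lambda>z. snd (PsiB z n)) holomorphic_on {z. 1 < cmod z}"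
    and PsiB_cont: "\<And>n. continuous_on {z. 1 \<le> cmod z} (\<lambda>z. fst (PsiB z n)) \<and> continuous_on {z. 1 \<le> cmod z} (\<lambda>z. snd (PsiB z n))"
    and PhiB_hol: "\<And>n. (\<lambda>z. fst (PhiB z n)) holomorphic_on {z. 1 < cmod z} \<and> (\<lambda>z. snd (PhiB z n)) holomorphic_on {z. 1 < cmod z}"
    and PhiB_cont: "\<And>n. continuous_on {z. 1 \<le> cmod z} (\<lambda>z. fst (PhiB z n)) \<and> continuous_on {z. 1 \<le> cmod z} (\<lambda>z. snd (PhiB z n))"
    and invTB_hol: "invTB holomorphic_on {z. 1 < cmod z}"
    and invTB_cont: "continuous_on {z. 1 \<le> cmod z} invTB"
    \<comment> \<open>On |z| = 1 the (unnormalised) Jost solutions solve the system and have the prescribed asymptotics\<close>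
    and psi_sol: "\<And>z. cmod z = 1 \<Longrightarrow> is_solution u v z (\<lambda>n. scalev (z powi n) (Psi z n))"
    and phi_sol: "\<And>z. cmod z = 1 \<Longrightarrow> is_solution u v z (\<lambda>n. scalev (z powi (- n)) (Phi z n))"
    and psiB_sol: "\<And>z. cmod z = 1 \<Longrightarrow> is_solution u v z (\<lambda>n. scalev (z powi (- n)) (PsiB z n))"
    and phiB_sol: "\<And>z. cmod z = 1 \<Longrightarrow> is_solution u v z (\<lambda>n. scalev (z powi n) (PhiB z n))"
    and psi_asym: "\<And>z. cmod z = 1 \<Longrightarrow>
        ((\<lambda>n. fst (scalev (z powi n) (Psi z n))) \<longlongrightarrow> 0) at_top \<and>
        ((\<lambda>n. snd (scalev (z powi n) (Psi z n)) * z powi (- n)) \<longlongrightarrow> 1) at_top"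
    and phi_asym: "\<And>z. cmod z = 1 \<Longrightarrow>
        ((\<lambda>n. fst (scalev (z powi (- n)) (Phi z n)) * z powi n) \<longlongrightarrow> 1) at_bot \<and>
        ((\<lambda>n. snd (scalev (z powi (- n)) (Phi z n))) \<longlongrightarrow> 0) at_bot"
    and psiB_asym: "\<And>z. cmod z = 1 \<Longrightarrow>
        ((\<lambda>n. fst (scalev (z powi (- n)) (PsiB z n)) * z powi n) \<longlongrightarrow> 1) at_top \<and>
        ((\<lambda>n. snd (scalev (z powi (- n)) (PsiB z n))) \<longlongrightarrow> 0) at_top"
    and phiB_asym: "\<And>z. cmod z = 1 \<Longrightarrow>
        ((\<lambda>n. fst (scalev (z powi n) (PhiB z n))) \<longlongrightarrow> 0) at_bot \<and>
        ((\<lambda>n. snd (scalev (z powi n) (PhiB z n)) * z powi (- n)) \<longlongrightarrow> 1) at_bot"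
    \<comment> \<open>definition of the right transmission coefficients on |z| = 1\<close>
    and Tr_def: "\<And>z. cmod z = 1 \<Longrightarrow>
        ((\<lambda>n. fst (scalev (z powi (- n)) (Phi z n)) * z powi n) \<longlongrightarrow> invT z) at_top"
    and TrB_def: "\<And>z. cmod z = 1 \<Longrightarrow>
        ((\<lambda>n. snd (scalev (z powi n) (PhiB z n)) * z powi (- n)) \<longlongrightarrow> invTB z) at_top"
  shows
    "(\<forall>n. \<forall>z\<in>cball 0 1.
        det2 (Phi z n) (Psi z n) = Dinf u v / Dn u v (n - 1) * invT z) \<and>
     (\<forall>n. \<forall>z. 1 \<le> cmod z \<longrightarrow>
        det2 (PhiB z n) (PsiB z n) = - (Dinf u v / Dn u v (n - 1)) * invTB z) \<and>
     (\<forall>n. \<forall>z\<in>cball 0 1. lin_dep2 (Phi z n) (Psi z n) \<longleftrightarrow> invT z = 0) \<and>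
     (\<forall>n. \<forall>z. 1 \<le> cmod z \<longrightarrow> (lin_dep2 (PhiB z n) (PsiB z n) \<longleftrightarrow> invTB z = 0)) \<and>
     (\<forall>w m. w \<in> ball 0 1 \<and> is_pole (\<lambda>z. inverse (invT z)) w \<and>
            zorder (\<lambda>z. inverse (invT z)) w = - int m \<longrightarrow>
        (\<forall>k<m. \<forall>n. (deriv ^^ k) (\<lambda>z. det2 (Phi z n) (Psi z n)) w = 0)) \<and>
     (\<forall>w m. 1 < cmod w \<and> is_pole (\<lambda>z. inverse (invTB z)) w \<and>
            zorder (\<lambda>z. inverse (invTB z)) w = - int m \<longrightarrow>
        (\<forall>k<m. \<forall>n. (deriv ^^ k) (\<lambda>z. det2 (PhiB z n) (PsiB z n)) w = 0))"
proof -
  note rd = decay_u decay_v nonzero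
  define c where "c = (\<lambda>n. Dinf u v / Dn u v (n - 1))"
  have cnz: "c n \<noteq> 0" for n
    unfolding c_def using Dinf_nonzero[OF rd] Dn_nonzero[OF rd] by simp
  have circ1: "det2 (Phi z n) (Psi z n) = c n * invT z" if z1: "cmod z = 1" for z n
  proof -
    have z0: "z \<noteq> 0" using z1 by auto
    define phi where "phi = (\<lambda>n. scalev (z powi (- n)) (Phi z n))"
    define psi where "psi = (\<lambda>n. scalev (z powi n) (Psi z n))"
    define psiB where "psiB = (\<lambda>n. scalev (z powi (- n)) (PsiB z n))"
    have s1: "is_solution u v z phi" unfolding phi_def by (rule phi_sol[OF z1])
    have s2: "is_solution u v z psiB" unfolding psiB_def by (rule psiB_sol[OF z1])
    have s3: "is_solution u v z psi" unfolding psi_def by (rule psi_sol[OF z1])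
    have B1: "((\<lambda>n. fst (psiB n) * z powi n) \<longlongrightarrow> 1) at_top"
     and B2: "((\<lambda>n. snd (psiB n)) \<longlongrightarrow> 0) at_top"
      using psiB_asym[OF z1] unfolding psiB_def by blast+
    have C1: "((\<lambda>n. fst (psi n)) \<longlongrightarrow> 0) at_top"
     and C2: "((\<lambda>n. snd (psi n) * z powi (- n)) \<longlongrightarrow> 1) at_top"
      using psi_asym[OF z1] unfolding psi_def by blast+
    have T: "((\<lambda>n. fst (phi n) * z powi n) \<longlongrightarrow> invT z) at_top"
      using Tr_def[OF z1] unfolding phi_def by blast
    note cl = cross_lims(1)[OF rd s1 s2 s3 z1 B1 B2 C1 C2]
    have eq: "det2 (phi (int N + 1)) (psi (int N + 1)) =
       (fst (phi (int N + 1)) * z powi (int N + 1)) * (snd (psi (int N + 1)) * z powi (- (int N + 1)))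
        - snd (phi (int N + 1)) * fst (psi (int N + 1))" for N
    proof -
      have "(fst (phi (int N + 1)) * z powi (int N + 1)) * (snd (psi (int N + 1)) * z powi (- (int N + 1)))
          = (fst (phi (int N + 1)) * snd (psi (int N + 1))) * (z powi (int N + 1) * z powi (- (int N + 1)))"
        by (simp add: mult_ac)
      moreover have "z powi (- (int N + 1)) * z powi (int N + 1) = 1"
        using powi_cancel[OF z0, of "int N + 1"] by (simp only: mult.commute)
      ultimately show ?thesis unfolding det2_def using powi_cancel[OF z0, of "int N + 1"] by simp
    qed
    have lim: "(\<lambda>N. det2 (phi (int N + 1)) (psi (int N + 1))) \<longlonglongrightarrow> invT z * 1 - 0"
      unfolding eq by (intro tendsto_intros seq_shift_lim T C2 cl)
    have "det2 (phi n) (psi n) = c n * invT z"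
      using W_formula[OF rd s1 s3 z0 lim] by (simp add: c_def)
    moreover have "det2 (phi n) (psi n) = det2 (Phi z n) (Psi z n)"
      unfolding phi_def psi_def det2_scalev using powi_cancel[OF z0, of n] by (simp add: mult.commute)
    ultimately show ?thesis by simp
  qed
  have circ2: "det2 (PhiB z n) (PsiB z n) = - c n * invTB z" if z1: "cmod z = 1" for z n
  proof -
    have z0: "z \<noteq> 0" using z1 by auto
    define phiB where "phiB = (\<lambda>n. scalev (z powi n) (PhiB z n))"
    define psi where "psi = (\<lambda>n. scalev (z powi n) (Psi z n))"
    define psiB where "psiB = (\<lambda>n. scalev (z powi (- n)) (PsiB z n))"
    have s1: "is_solution u v z phiB" unfolding phiB_def by (rule phiB_sol[OF z1])
    have s2: "is_solution u v z psiB" unfolding psiB_def by (rule psiB_sol[OF z1])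
    have s3: "is_solution u v z psi" unfolding psi_def by (rule psi_sol[OF z1])
    have B1: "((\<lambda>n. fst (psiB n) * z powi n) \<longlongrightarrow> 1) at_top"
     and B2: "((\<lambda>n. snd (psiB n)) \<longlongrightarrow> 0) at_top"
      using psiB_asym[OF z1] unfolding psiB_def by blast+
    have C1: "((\<lambda>n. fst (psi n)) \<longlongrightarrow> 0) at_top"
     and C2: "((\<lambda>n. snd (psi n) * z powi (- n)) \<longlongrightarrow> 1) at_top"
      using psi_asym[OF z1] unfolding psi_def by blast+
    have T: "((\<lambda>n. snd (phiB n) * z powi (- n)) \<longlongrightarrow> invTB z) at_top"
      using TrB_def[OF z1] unfolding phiB_def by blast
    note cl = cross_lims(2)[OF rd s1 s2 s3 z1 B1 B2 C1 C2]
    have eq: "det2 (phiB (int N + 1)) (psiB (int N + 1)) =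
       fst (phiB (int N + 1)) * snd (psiB (int N + 1)) -
       (snd (phiB (int N + 1)) * z powi (- (int N + 1))) * (fst (psiB (int N + 1)) * z powi (int N + 1))" for N
    proof -
      have "(snd (phiB (int N + 1)) * z powi (- (int N + 1))) * (fst (psiB (int N + 1)) * z powi (int N + 1))
          = (snd (phiB (int N + 1)) * fst (psiB (int N + 1))) * (z powi (int N + 1) * z powi (- (int N + 1)))"
        by (simp add: mult_ac)
      moreover have "z powi (- (int N + 1)) * z powi (int N + 1) = 1"
        using powi_cancel[OF z0, of "int N + 1"] by (simp only: mult.commute)
      ultimately show ?thesis unfolding det2_def using powi_cancel[OF z0, of "int N + 1"] by simp
    qed
    have lim: "(\<lambda>N. det2 (phiB (int N + 1)) (psiB (int N + 1))) \<longlonglongrightarrow> 0 - invTB z * 1"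
      unfolding eq by (intro tendsto_intros seq_shift_lim T B1 cl)
    have "det2 (phiB n) (psiB n) = - c n * invTB z"
      using W_formula[OF rd s1 s2 z0 lim] by (simp add: c_def)
    moreover have "det2 (phiB n) (psiB n) = det2 (PhiB z n) (PsiB z n)"
      unfolding phiB_def psiB_def det2_scalev using powi_cancel[OF z0, of n] by simp
    ultimately show ?thesis by simp
  qed
  have int1: "det2 (Phi z n) (Psi z n) = c n * invT z" if z: "z \<in> cball 0 1" for z n
  proof -
    have "(\<lambda>z. det2 (Phi z n) (Psi z n) - c n * invT z) z = 0"
    proof (rule disk_zero[OF _ _ _ z])
      show "(\<lambda>z. det2 (Phi z n) (Psi z n) - c n * invT z) holomorphic_on ball 0 1"
        unfolding det2_def using Phi_hol[of n] Psi_hol[of n] invT_hol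
        by (intro holomorphic_intros) auto
      show "continuous_on (cball 0 1) (\<lambda>z. det2 (Phi z n) (Psi z n) - c n * invT z)"
        unfolding det2_def using Phi_cont[of n] Psi_cont[of n] invT_cont
        by (intro continuous_on_diff continuous_on_mult continuous_on_const) auto
      show "det2 (Phi w n) (Psi w n) - c n * invT w = 0" if "cmod w = 1" for w
        using circ1[OF that] by simp
    qed
    then show ?thesis by simp
  qed
  have ext1: "det2 (PhiB z n) (PsiB z n) = - c n * invTB z" if z: "1 \<le> cmod z" for z n
  proof -
    have "(\<lambda>z. det2 (PhiB z n) (PsiB z n) - (- c n * invTB z)) z = 0"
    proof (rule ext_zero[OF _ _ _ z])
      show "(\<lambda>z. det2 (PhiB z n) (PsiB z n) - (- c n * invTB z)) holomorphic_on {z. 1 < cmod z}"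
        unfolding det2_def using PhiB_hol[of n] PsiB_hol[of n] invTB_hol
        by (intro holomorphic_intros) auto
      show "continuous_on {z. 1 \<le> cmod z} (\<lambda>z. det2 (PhiB z n) (PsiB z n) - (- c n * invTB z))"
        unfolding det2_def using PhiB_cont[of n] PsiB_cont[of n] invTB_cont
        by (intro continuous_on_diff continuous_on_mult continuous_on_const) auto
      show "det2 (PhiB w n) (PsiB w n) - (- c n * invTB w) = 0" if "cmod w = 1" for w
        using circ2[OF that] by simp
    qed
    then show ?thesis by (simp add: add_eq_0_iff2)
  qed
  have P1: "\<forall>n. \<forall>z\<in>cball 0 1. det2 (Phi z n) (Psi z n) = Dinf u v / Dn u v (n - 1) * invT z"
    using int1 unfolding c_def by blast
  have P2: "\<forall>n. \<forall>z. 1 \<le> cmod z \<longrightarrow> det2 (PhiB z n) (PsiB z n) = - (Dinf u v / Dn u v (n - 1)) * invTB z"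
    using ext1 unfolding c_def by blast
  have P3: "\<forall>n. \<forall>z\<in>cball 0 1. lin_dep2 (Phi z n) (Psi z n) \<longleftrightarrow> invT z = 0"
    using int1 cnz by (simp add: lin_dep2_iff)
  have P4: "\<forall>n. \<forall>z. 1 \<le> cmod z \<longrightarrow> (lin_dep2 (PhiB z n) (PsiB z n) \<longleftrightarrow> invTB z = 0)"
    using ext1 cnz by (simp add: lin_dep2_iff)
  have P5: "\<forall>k<m. \<forall>n. (deriv ^^ k) (\<lambda>z. det2 (Phi z n) (Psi z n)) w = 0"
    if w: "w \<in> ball 0 1" and pole: "is_pole (\<lambda>z. inverse (invT z)) w"
      and ord: "zorder (\<lambda>z. inverse (invT z)) w = - int m" for w m
  proof (intro allI impI)
    fix k n assume k: "k < m"
    have "eventually (\<lambda>z. z \<in> ball 0 1) (nhds w)"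
      using w by (intro eventually_nhds_in_open) auto
    then have "eventually (\<lambda>z. det2 (Phi z n) (Psi z n) = c n * invT z) (nhds w)"
      by (auto elim!: eventually_mono intro: int1)
    then have "(deriv ^^ k) (\<lambda>z. det2 (Phi z n) (Psi z n)) w = (deriv ^^ k) (\<lambda>z. c n * invT z) w"
      by (intro higher_deriv_cong_ev) auto
    also have "\<dots> = c n * (deriv ^^ k) invT w"
      by (rule higher_deriv_cmult[OF invT_hol w open_ball])
    also have "(deriv ^^ k) invT w = 0"
      by (rule deriv_vanish[OF invT_hol open_ball w pole ord k])
    finally show "(deriv ^^ k) (\<lambda>z. det2 (Phi z n) (Psi z n)) w = 0" by simp
  qed
  have P6: "\<forall>k<m. \<forall>n. (deriv ^^ k) (\<lambda>z. det2 (PhiB z n) (PsiB z n)) w = 0"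
    if w: "1 < cmod w" and pole: "is_pole (\<lambda>z. inverse (invTB z)) w"
      and ord: "zorder (\<lambda>z. inverse (invTB z)) w = - int m" for w m
  proof (intro allI impI)
    fix k n assume k: "k < m"
    have wS: "w \<in> {z. 1 < cmod z}" using w by simp
    have "eventually (\<lambda>z. z \<in> {z. 1 < cmod z}) (nhds w)"
      using wS open_ext by (intro eventually_nhds_in_open) auto
    then have "eventually (\<lambda>z. det2 (PhiB z n) (PsiB z n) = (- c n) * invTB z) (nhds w)"
      by (rule eventually_mono) (use ext1 in auto)
    then have "(deriv ^^ k) (\<lambda>z. det2 (PhiB z n) (PsiB z n)) w = (deriv ^^ k) (\<lambda>z. (- c n) * invTB z) w"
      by (intro higher_deriv_cong_ev) auto
    also have "\<dots> = (- c n) * (deriv ^^ k) invTB w"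
      by (rule higher_deriv_cmult[OF invTB_hol wS open_ext])
    also have "(deriv ^^ k) invTB w = 0"
      by (rule deriv_vanish[OF invTB_hol open_ext wS pole ord k])
    finally show "(deriv ^^ k) (\<lambda>z. det2 (PhiB z n) (PsiB z n)) w = 0" by simp
  qed
  show ?thesis using P1 P2 P3 P4 P5 P6 by blast
qed

end
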